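(* Let $P$ be the set of ordered pairs $(x,y)$ of integers with $x\ge y\ge 0$. Let $Q$ be the set of quadruples $(v;r,s;\lambda)$ of integers satisfying $$\lambda(v-1)=r(r-1)+s(s-1),\qquad v=2n+1 \text{ where } n=r+s-\lambda,\qquad v/2\ge r\ge s\ge 0.$$ Then the map $P\to Q$ given by $$v=1+x(x+1)+y(y+1),\quad r=\binom{x+1}{2}+\binom{y}{2},\quad s=\binom{x}{2}+\binom{y+1}{2},\quad \lambda=\binom{x}{2}+\binom{y}{2}$$ is well defined (its values lie in $Q$) and is a bijection from $P$ onto $Q$.
   Context: $Q$ is the set of normalized feasible parameter sets of "D-optimal" supplementary difference sets with two base blocks. Binomial coefficients are the usual ones, with $\binom{k}{2}=k(k-1)/2$ (so $\binom{0}{2}=\binom{1}{2}=0$). *)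

theory Defs
  imports Complex_Main
begin

definition P_set :: "(int \<times> int) set" where
  "P_set = {(x, y). x \<ge> y \<and> y \<ge> 0}"

definition Q_set :: "(int \<times> int \<times> int \<times> int) set" where
  "Q_set = {(v, r, s, lam). lam * (v - 1) = r * (r - 1) + s * (s - 1)
      \<and> v = 2 * (r + s - lam) + 1
      \<and> real_of_int v / 2 \<ge> real_of_int r \<and> r \<ge> s \<and> s \<ge> 0}"

text \<open>Binomial coefficient C(k,2) for integers k >= 0 (arguments are nonnegative on P).\<close>
definition binom2 :: "int \<Rightarrow> int" where
  "binom2 k = int (nat k choose 2)"

definition phi :: "int \<times> int \<Rightarrow> int \<times> int \<times> int \<times> int" where
  "phi p = (case p of (x, y) \<Rightarrow>
     (1 + x * (x + 1) + y * (y + 1),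
      binom2 (x + 1) + binom2 y,
      binom2 x + binom2 (y + 1),
      binom2 x + binom2 y))"

end

theory Submission
  imports Defs
begin

lemma binom2_step: "k \<ge> 0 \<Longrightarrow> binom2 (k + 1) = binom2 k + k"
proof -
  assume k: "k \<ge> 0"
  have "nat (k+1) = Suc (nat k)" using k by simp
  then have "binom2 (k+1) = int (Suc (nat k) choose Suc 1)"
    by (simp add: binom2_def numeral_2_eq_2)
  also have "\<dots> = int (nat k choose 1) + int (nat k choose 2)"
    by (simp add: numeral_2_eq_2)
  also have "\<dots> = binom2 k + k" using k by (simp add: binom2_def)
  finally show ?thesis .
qed

lemma binom2_two: "k \<ge> 0 \<Longrightarrow> 2 * binom2 k = k * (k - 1)"
proof (induction k rule: int_ge_induct)
  case base
  then show ?case by (simp add: binom2_def)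
next
  case (step i)
  then show ?case using binom2_step[of i] by (simp add: algebra_simps)
qed

theorem proposition1:
  shows "phi ` P_set \<subseteq> Q_set \<and> bij_betw phi P_set Q_set"
proof -
  have img: "phi ` P_set \<subseteq> Q_set"
  proof
    fix q assume "q \<in> phi ` P_set"
    then obtain x y where xy: "y \<ge> 0" "x \<ge> y" and q: "q = phi (x, y)"
      by (auto simp: P_set_def)
    have x0: "x \<ge> 0" using xy by simp
    have e1: "binom2 (x+1) = binom2 x + x" using binom2_step x0 by simp
    have e2: "binom2 (y+1) = binom2 y + y" using binom2_step xy by simp
    have e3: "2 * binom2 x = x*(x-1)" using binom2_two x0 by simp
    have e4: "2 * binom2 y = y*(y-1)" using binom2_two xy by simp
    have by0: "binom2 y \<ge> 0" by (simp add: binom2_def)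
    define bx cy where "bx = binom2 x" and "cy = binom2 y"
    have P: "2*((x*(x-1)) + (y*(y-1))) * (x*(x+1) + y*(y+1)) =
      (x*(x-1) + 2*x + y*(y-1)) * (x*(x-1) + 2*x + y*(y-1) - 2)
      + (x*(x-1) + y*(y-1) + 2*y) * (x*(x-1) + y*(y-1) + 2*y - 2)"
      by (simp add: algebra_simps power2_eq_square)
    have P2: "4*((bx + cy) * (x * (x + 1) + y * (y + 1))) =
      4*((bx + x + cy) * (bx + x + cy - 1) + (bx + (cy + y)) * (bx + (cy + y) - 1))"
    proof -
      have "4*((bx + cy) * (x * (x + 1) + y * (y + 1))) = 2*((2*bx) + (2*cy)) * (x*(x+1) + y*(y+1))"
        by (simp add: algebra_simps)
      also have "\<dots> = (2*bx + 2*x + 2*cy) * (2*bx + 2*x + 2*cy - 2)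
         + (2*bx + 2*cy + 2*y) * (2*bx + 2*cy + 2*y - 2)"
        using P e3 e4 by (simp add: bx_def cy_def)
      also have "\<dots> = 4*((bx + x + cy) * (bx + x + cy - 1) + (bx + (cy + y)) * (bx + (cy + y) - 1))"
        by (simp add: algebra_simps)
      finally show ?thesis .
    qed
    have A: "(bx + cy) * (1 + x * (x + 1) + y * (y + 1) - 1) =
      (bx + x + cy) * (bx + x + cy - 1) + (bx + (cy + y)) * (bx + (cy + y) - 1)"
      using P2 by simp
    have I: "2*(bx + x + cy) \<le> 1 + x * (x + 1) + y * (y + 1)"
      using e3 e4 xy by (simp add: bx_def cy_def algebra_simps)
    have Ireal: "real_of_int (2*(bx + x + cy)) \<le> real_of_int (1 + x * (x + 1) + y * (y + 1))"
      using I by (simp only: of_int_le_iff)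
    have bx0: "bx \<ge> 0" by (simp add: bx_def binom2_def)
    have V: "1 + x * (x + 1) + y * (y + 1) = 2 * ((bx + x + cy) + (bx + (cy + y)) - (bx + cy)) + 1"
      using e3 e4 by (simp add: bx_def cy_def algebra_simps)
    have q': "q = (1 + x * (x + 1) + y * (y + 1), bx + x + cy, bx + (cy + y), bx + cy)"
      unfolding q phi_def using e1 e2 by (simp add: bx_def cy_def)
    show "q \<in> Q_set"
      unfolding q' Q_set_def using A V xy by0 bx0 Ireal by (simp add: cy_def)
  qed
  have inj: "inj_on phi P_set"
  proof (rule inj_onI)
    fix p1 p2 assume a: "p1 \<in> P_set" "p2 \<in> P_set" "phi p1 = phi p2"
    obtain x1 y1 where 1: "p1 = (x1,y1)" "y1 \<ge> 0" "x1 \<ge> y1" using a(1) by (auto simp: P_set_def)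
    obtain x2 y2 where 2: "p2 = (x2,y2)" "y2 \<ge> 0" "x2 \<ge> y2" using a(2) by (auto simp: P_set_def)
    have "x1 = x2" "y1 = y2"
      using a(3) 1 2 binom2_step[of x1] binom2_step[of x2] binom2_step[of y1] binom2_step[of y2]
      by (auto simp: phi_def)
    then show "p1 = p2" using 1 2 by simp
  qed
  have surj: "Q_set \<subseteq> phi ` P_set"
  proof
    fix q assume "q \<in> Q_set"
    then obtain v r s lam where q: "q = (v,r,s,lam)"
      and h1: "lam * (v - 1) = r * (r - 1) + s * (s - 1)"
      and h2: "v = 2 * (r + s - lam) + 1"
      and h3: "real_of_int v / 2 \<ge> real_of_int r" and h4: "r \<ge> s" "s \<ge> 0"
      by (auto simp: Q_set_def)
    define a b where "a = r - lam" and "b = s - lam"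
    have "real_of_int v \<ge> 2 * real_of_int r" using h3 by simp
    then have "v \<ge> 2 * r" by linarith
    then have b0: "b \<ge> 0" using h2 by (simp add: b_def)
    have ab: "a \<ge> b" using h4 by (simp add: a_def b_def)
    have r: "r = a + lam" and s: "s = b + lam" by (simp_all add: a_def b_def)
    have "lam * (2*(a+b+lam)) = (a+lam)*(a+lam-1) + (b+lam)*(b+lam-1)"
      using h1 h2 r s by (simp add: algebra_simps)
    then have L: "2 * lam = a*(a-1) + b*(b-1)" by (simp add: algebra_simps)
    have a0: "a \<ge> 0" using ab b0 by simp
    have e1: "binom2 (a+1) = binom2 a + a" using binom2_step a0 by simp
    have e2: "binom2 (b+1) = binom2 b + b" using binom2_step b0 by simp
    have e3: "2 * binom2 a = a*(a-1)" using binom2_two a0 by simp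
    have e4: "2 * binom2 b = b*(b-1)" using binom2_two b0 by simp
    have lam: "lam = binom2 a + binom2 b" using L e3 e4 by simp
    have "phi (a,b) = q"
      unfolding phi_def q using e1 e2 lam r s h2 e3 e4 by (simp add: algebra_simps)
    moreover have "(a,b) \<in> P_set" using ab b0 by (simp add: P_set_def)
    ultimately show "q \<in> phi ` P_set" by force
  qed
  show ?thesis using img inj surj unfolding bij_betw_def by blast
qed

end
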